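(* For $n>0$ and $J\subseteq S$, there is a bijection $\mathrm{NN}_n^J\simeq\mathrm{NC}_n^J$.
   Context: $S=\{s_1,\dots,s_{n-1}\}$ with $s_i=(i,i+1)$ the adjacent transpositions of $\mathfrak{S}_n$. For $J\subseteq S$, writing $J=S\setminus\{s_{j_1},\dots,s_{j_r}\}$ with $j_1<\dots<j_r$, the $J$-regions are $\{1,\dots,j_1\},\{j_1+1,\dots,j_2\},\dots,\{j_r+1,\dots,n\}$. For a set partition $\mathbf P$ of $[n]$, a bump is a pair $(a,b)$, $a<b$, with $a,b$ in the same part and no element of that part strictly between them. $\mathbf P$ is $J$-noncrossing if: (NC1) no two distinct elements of the same $J$-region lie in the same part; (NC2) whenever two distinct bumps $(i_1,i_2),(j_1,j_2)$ satisfy $i_1<j_1<i_2<j_2$, either $i_1,j_1$ lie in the same $J$-region or $i_2,j_1$ lie in the same $J$-region; (NC3) whenever two distinct bumps satisfy $i_1<j_1<j_2<i_2$, then $i_1$ and $j_1$ lie in different $J$-regions. $\mathbf P$ is $J$-nonnesting if (NN1) no two distinct elements of the same $J$-region lie in the same part, and (NN2) there are no two distinct bumps $(i_1,i_2),(j_1,j_2)$ with $i_1<j_1<j_2<i_2$. $\mathrm{NC}_n^J$ and $\mathrm{NN}_n^J$ denote the sets of $J$-noncrossing and $J$-nonnesting partitions of $[n]$. *)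

theory Defs
  imports Main "HOL-Library.Disjoint_Sets"
begin

text \<open>The generator s_i = (i,i+1) of S_n is identified with its index i; so
  S corresponds to {1..<n} and a subset J of S to a subset of {1..<n}.
  The J-regions are the blocks {1..j_1}, {j_1+1..j_2}, ..., {j_r+1..n}, where
  s_{j_1},...,s_{j_r} are the generators not in J.\<close>

definition same_region :: "nat \<Rightarrow> nat set \<Rightarrow> nat \<Rightarrow> nat \<Rightarrow> bool" where
  "same_region n J a b \<longleftrightarrow>
     (\<forall>k \<in> {1..<n} - J. \<not> (min a b \<le> k \<and> k < max a b))"

definition set_partitions :: "nat \<Rightarrow> nat set set set" where
  "set_partitions n = {P. partition_on {1..n} P}"

definition bump :: "nat set set \<Rightarrow> nat \<Rightarrow> nat \<Rightarrow> bool" where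
  "bump P a b \<longleftrightarrow> a < b \<and> (\<exists>B\<in>P. a \<in> B \<and> b \<in> B \<and> \<not> (\<exists>c\<in>B. a < c \<and> c < b))"

definition region_injective :: "nat \<Rightarrow> nat set \<Rightarrow> nat set set \<Rightarrow> bool" where
  "region_injective n J P \<longleftrightarrow>
     (\<forall>B\<in>P. \<forall>a\<in>B. \<forall>b\<in>B. a \<noteq> b \<longrightarrow> \<not> same_region n J a b)"

definition J_noncrossing :: "nat \<Rightarrow> nat set \<Rightarrow> nat set set \<Rightarrow> bool" where
  "J_noncrossing n J P \<longleftrightarrow>
     region_injective n J P \<and>
     (\<forall>i1 i2 j1 j2. bump P i1 i2 \<and> bump P j1 j2 \<and> (i1, i2) \<noteq> (j1, j2) \<and>
        i1 < j1 \<and> j1 < i2 \<and> i2 < j2 \<longrightarrow>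
        same_region n J i1 j1 \<or> same_region n J i2 j1) \<and>
     (\<forall>i1 i2 j1 j2. bump P i1 i2 \<and> bump P j1 j2 \<and> (i1, i2) \<noteq> (j1, j2) \<and>
        i1 < j1 \<and> j1 < j2 \<and> j2 < i2 \<longrightarrow>
        \<not> same_region n J i1 j1)"

definition J_nonnesting :: "nat \<Rightarrow> nat set \<Rightarrow> nat set set \<Rightarrow> bool" where
  "J_nonnesting n J P \<longleftrightarrow>
     region_injective n J P \<and>
     \<not> (\<exists>i1 i2 j1 j2. bump P i1 i2 \<and> bump P j1 j2 \<and> (i1, i2) \<noteq> (j1, j2) \<and>
        i1 < j1 \<and> j1 < j2 \<and> j2 < i2)"

definition NC :: "nat \<Rightarrow> nat set \<Rightarrow> nat set set set" where
  "NC n J = {P \<in> set_partitions n. J_noncrossing n J P}"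

definition NN :: "nat \<Rightarrow> nat set \<Rightarrow> nat set set set" where
  "NN n J = {P \<in> set_partitions n. J_nonnesting n J P}"

end

theory Submission
  imports Defs
begin

definition VM :: "nat \<Rightarrow> (nat \<times> nat) set \<Rightarrow> bool" where
  "VM n M \<longleftrightarrow> M \<subseteq> {1..n} \<times> {1..n} \<and> (\<forall>(a,b)\<in>M. a < b) \<and>
     (\<forall>a b c. (a,b)\<in>M \<longrightarrow> (a,c)\<in>M \<longrightarrow> b = c) \<and>
     (\<forall>a b c. (a,c)\<in>M \<longrightarrow> (b,c)\<in>M \<longrightarrow> a = b)"

definition bumps :: "nat set set \<Rightarrow> (nat \<times> nat) set" where
  "bumps P = {(a,b). bump P a b}"

lemma part_same:
  assumes "partition_on A P" "B \<in> P" "B' \<in> P" "x \<in> B" "x \<in> B'"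
  shows "B = B'"
  using assms disjointD[OF partition_onD2[OF assms(1)]] by blast

lemma part_sub:
  assumes "partition_on A P" "B \<in> P" shows "B \<subseteq> A"
proof -
  have "B \<subseteq> \<Union>P" using assms(2) by (rule Union_upper)
  then show ?thesis using partition_onD1[OF assms(1)] by simp
qed

lemma bumps_VM:
  assumes "P \<in> set_partitions n"
  shows "VM n (bumps P)"
proof -
  have p: "partition_on {1..n} P" using assms by (simp add: set_partitions_def)
  show ?thesis
    unfolding VM_def bumps_def
  proof (intro conjI allI impI)
    show "{(a, b). bump P a b} \<subseteq> {1..n} \<times> {1..n}"
      using part_sub[OF p] unfolding bump_def by blast
    show "\<forall>(a, b)\<in>{(a, b). bump P a b}. a < b" by (auto simp: bump_def)
  next
    fix a b c assume h: "(a, b) \<in> {(a, b). bump P a b}" "(a, c) \<in> {(a, b). bump P a b}"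
    then obtain B B' where B: "B\<in>P" "a\<in>B" "b\<in>B" "\<not>(\<exists>x\<in>B. a<x \<and> x<b)" "a<b"
      and B': "B'\<in>P" "a\<in>B'" "c\<in>B'" "\<not>(\<exists>x\<in>B'. a<x \<and> x<c)" "a<c"
      by (auto simp: bump_def)
    have "B = B'" using part_same[OF p B(1) B'(1) B(2) B'(2)] .
    then show "b = c" using B B' by (cases b c rule: linorder_cases) auto
  next
    fix a b c assume h: "(a, c) \<in> {(a, b). bump P a b}" "(b, c) \<in> {(a, b). bump P a b}"
    then obtain B B' where B: "B\<in>P" "a\<in>B" "c\<in>B" "\<not>(\<exists>x\<in>B. a<x \<and> x<c)" "a<c"
      and B': "B'\<in>P" "b\<in>B'" "c\<in>B'" "\<not>(\<exists>x\<in>B'. b<x \<and> x<c)" "b<c"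
      by (auto simp: bump_def)
    have "B = B'" using part_same[OF p B(1) B'(1) B(3) B'(3)] .
    then show "a = b" using B B' by (cases a b rule: linorder_cases) auto
  qed
qed

lemma next_bump:
  assumes p: "partition_on {1..n} P" and B: "B \<in> P" "a \<in> B" "b \<in> B" "a < b"
  shows "\<exists>c. bump P a c \<and> c \<le> b \<and> c \<in> B"
proof -
  have "{c\<in>B. a < c} \<subseteq> {1..n}" using part_sub[OF p B(1)] by auto
  then have fin: "finite {c\<in>B. a < c}" by (rule finite_subset) simp
  have ne: "{c\<in>B. a < c} \<noteq> {}" using B by blast
  define c where "c = Min {c\<in>B. a < c}"
  have c1: "c \<in> B" "a < c" using Min_in[OF fin ne] unfolding c_def by auto
  have c2: "c \<le> b" using Min_le[OF fin] B unfolding c_def by auto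
  have c3: "\<not>(\<exists>x\<in>B. a<x \<and> x<c)"
  proof
    assume "\<exists>x\<in>B. a<x \<and> x<c"
    then obtain x where "x \<in> B" "a < x" "x < c" by blast
    moreover have "c \<le> x" unfolding c_def using Min_le[OF fin] \<open>x \<in> B\<close> \<open>a < x\<close> by blast
    ultimately show False by simp
  qed
  show ?thesis using c1 c2 c3 B unfolding bump_def by blast
qed

lemma block_path:
  assumes p: "partition_on {1..n} P" and B: "B \<in> P"
  shows "\<forall>x\<in>B. \<forall>y\<in>B. x \<le> y \<longrightarrow> (x,y) \<in> (bumps P)\<^sup>*"
proof -
  have "\<forall>x\<in>B. \<forall>y\<in>B. y - x = d \<longrightarrow> x \<le> y \<longrightarrow> (x,y) \<in> (bumps P)\<^sup>*" for d
  proof (induction d rule: less_induct)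
    case (less d)
    show ?case
    proof (intro ballI impI)
      fix x y assume h: "x \<in> B" "y \<in> B" "y - x = d" "x \<le> y"
      show "(x,y) \<in> (bumps P)\<^sup>*"
      proof (cases "x = y")
        case True then show ?thesis by simp
      next
        case False
        then have "x < y" using h by simp
        then obtain c where c: "bump P x c" "c \<le> y" "c \<in> B" using next_bump[OF p B h(1) h(2)] by blast
        have "x < c" using c(1) by (simp add: bump_def)
        have "y - c < d" using h \<open>x < c\<close> c(2) by simp
        then have "(c,y) \<in> (bumps P)\<^sup>*" using less.IH[of "y - c"] h(2) c(2,3) by blast
        moreover have "(x,c) \<in> bumps P" using c by (simp add: bumps_def)
        ultimately show ?thesis by (meson converse_rtrancl_into_rtrancl)
      qed
    qed
  qed
  then show ?thesis by blast
qed

lemma bump_block: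
  assumes p: "partition_on {1..n} P" and B: "B \<in> P" and bp: "(y,z) \<in> bumps P"
  shows "y \<in> B \<longleftrightarrow> z \<in> B"
proof -
  from bp have "bump P y z" by (simp add: bumps_def)
  then obtain B' where B': "B' \<in> P" "y \<in> B'" "z \<in> B'" unfolding bump_def by blast
  show ?thesis
  proof
    assume "y \<in> B" then have "B = B'" using part_same[OF p B B'(1)] B'(2) by blast
    then show "z \<in> B" using B' by simp
  next
    assume "z \<in> B" then have "B = B'" using part_same[OF p B B'(1)] B'(3) by blast
    then show "y \<in> B" using B' by simp
  qed
qed

lemma path_block:
  assumes p: "partition_on {1..n} P" and B: "B \<in> P" and r: "(x,y) \<in> (bumps P)\<^sup>*"
  shows "x \<in> B \<longleftrightarrow> y \<in> B"
  using r
proof (induction rule: rtrancl_induct)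
  case base then show ?case by simp
next
  case (step y z)
  then show ?case using bump_block[OF p B step(2)] by simp
qed

lemma block_eq:
  assumes p: "partition_on {1..n} P" and B: "B \<in> P" "x \<in> B"
  shows "B = {y. (x,y) \<in> (bumps P)\<^sup>* \<or> (y,x) \<in> (bumps P)\<^sup>*}"
proof
  show "B \<subseteq> {y. (x,y) \<in> (bumps P)\<^sup>* \<or> (y,x) \<in> (bumps P)\<^sup>*}"
  proof
    fix y assume "y \<in> B"
    then show "y \<in> {y. (x,y) \<in> (bumps P)\<^sup>* \<or> (y,x) \<in> (bumps P)\<^sup>*}"
      using block_path[OF p B(1)] B(2) by (cases "x \<le> y") auto
  qed
  show "{y. (x,y) \<in> (bumps P)\<^sup>* \<or> (y,x) \<in> (bumps P)\<^sup>*} \<subseteq> B"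
  proof
    fix y assume "y \<in> {y. (x,y) \<in> (bumps P)\<^sup>* \<or> (y,x) \<in> (bumps P)\<^sup>*}"
    then have "(x,y) \<in> (bumps P)\<^sup>* \<or> (y,x) \<in> (bumps P)\<^sup>*" by simp
    then show "y \<in> B"
    proof
      assume "(x,y) \<in> (bumps P)\<^sup>*" then show ?thesis using path_block[OF p B(1)] B(2) by blast
    next
      assume "(y,x) \<in> (bumps P)\<^sup>*" then show ?thesis using path_block[OF p B(1)] B(2) by blast
    qed
  qed
qed

lemma bumps_inj:
  assumes "P \<in> set_partitions n" "Q \<in> set_partitions n" "bumps P = bumps Q"
  shows "P = Q"
proof -
  have p: "partition_on {1..n} P" and q: "partition_on {1..n} Q"
    using assms by (auto simp: set_partitions_def)
  have sub: "P \<subseteq> Q" if p: "partition_on {1..n} P" and q: "partition_on {1..n} Q"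
    and e: "bumps P = bumps Q" for P Q
  proof
    fix B assume B: "B \<in> P"
    have "B \<noteq> {}" using partition_onD3[OF p] B by metis
    then obtain x where x: "x \<in> B" by blast
    then have "x \<in> \<Union>Q" using part_sub[OF p B] partition_onD1[OF q] by blast
    then obtain B' where B': "B' \<in> Q" "x \<in> B'" by blast
    have "B = B'" using block_eq[OF p B x] block_eq[OF q B'] e by simp
    then show "B \<in> Q" using B' by simp
  qed
  show ?thesis using sub[OF p q assms(3)] sub[OF q p assms(3)[symmetric]] by (rule equalityI)
qed


lemma path_le: "(x,y) \<in> (M::(nat\<times>nat) set)\<^sup>* \<Longrightarrow> \<forall>(a,b)\<in>M. a < b \<Longrightarrow> x \<le> y"
proof (induction rule: rtrancl_induct)
  case base then show ?case by simp
next
  case (step y z) then have "y < z" by blast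
  then show ?case using step by simp
qed

lemma path_first:
  assumes "(x,y) \<in> M\<^sup>*" "x \<noteq> y"
  shows "\<exists>w. (x,w) \<in> M \<and> (w,y) \<in> M\<^sup>*"
  using assms by (metis converse_rtranclE)

lemma path_last:
  assumes "(x,y) \<in> M\<^sup>*" "x \<noteq> y"
  shows "\<exists>w. (x,w) \<in> M\<^sup>* \<and> (w,y) \<in> M"
  using assms by (metis rtranclE)

lemma sym_path:
  assumes V: "VM n M" and r: "(x,y) \<in> (M \<union> M\<inverse>)\<^sup>*"
  shows "(x,y) \<in> M\<^sup>* \<or> (y,x) \<in> M\<^sup>*"
  using r
proof (induction rule: rtrancl_induct)
  case base then show ?case by simp
next
  case (step y z)
  have fu: "\<And>a b c. (a,b)\<in>M \<Longrightarrow> (a,c)\<in>M \<Longrightarrow> b = c"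
   and inj: "\<And>a b c. (a,c)\<in>M \<Longrightarrow> (b,c)\<in>M \<Longrightarrow> a = b" using V unfolding VM_def by blast+
  from step(2) have "(y,z) \<in> M \<or> (z,y) \<in> M" by blast
  then show ?case
  proof
    assume yz: "(y,z) \<in> M"
    from step(3) show ?case
    proof
      assume "(x,y) \<in> M\<^sup>*" then show ?case using yz by (meson rtrancl.rtrancl_into_rtrancl)
    next
      assume yx: "(y,x) \<in> M\<^sup>*"
      show ?case
      proof (cases "y = x")
        case True then show ?thesis using yz by auto
      next
        case False
        then obtain w where "(y,w) \<in> M" "(w,x) \<in> M\<^sup>*" using path_first[OF yx] by blast
        then have "w = z" using fu yz by blast
        then show ?thesis using \<open>(w,x) \<in> M\<^sup>*\<close> by simp
      qed
    qed
  next
    assume zy: "(z,y) \<in> M"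
    from step(3) show ?case
    proof
      assume xy: "(x,y) \<in> M\<^sup>*"
      show ?case
      proof (cases "x = y")
        case True then show ?thesis using zy by auto
      next
        case False
        then obtain w where "(x,w) \<in> M\<^sup>*" "(w,y) \<in> M" using path_last[OF xy] by blast
        then have "w = z" using inj zy by blast
        then show ?thesis using \<open>(x,w) \<in> M\<^sup>*\<close> by simp
      qed
    next
      assume "(y,x) \<in> M\<^sup>*" then show ?case using zy by (meson converse_rtrancl_into_rtrancl)
    qed
  qed
qed

definition RM :: "nat \<Rightarrow> (nat \<times> nat) set \<Rightarrow> (nat \<times> nat) set" where
  "RM n M = (M \<union> M\<inverse>)\<^sup>* \<inter> ({1..n} \<times> {1..n})"

lemma RM_equiv: "equiv {1..n} (RM n M)"
proof (rule equivI)
  show "RM n M \<subseteq> {1..n} \<times> {1..n}" unfolding RM_def by blast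
  show "refl_on {1..n} (RM n M)" unfolding RM_def refl_on_def by blast
  show "sym (RM n M)" unfolding RM_def sym_def
    by (metis IntD1 IntD2 IntI converse_Un converse_converse converse_iff mem_Sigma_iff rtrancl_converse sup_commute)
  show "trans (RM n M)" unfolding RM_def trans_def
    by (metis IntD1 IntD2 IntI mem_Sigma_iff rtrancl_trans)
qed

lemma bumps_surj:
  assumes V: "VM n M"
  shows "\<exists>P \<in> set_partitions n. bumps P = M"
proof -
  define P where "P = {1..n} // RM n M"
  have eq: "equiv {1..n} (RM n M)" by (rule RM_equiv)
  have pp: "partition_on {1..n} P" unfolding P_def by (rule partition_on_quotient[OF eq])
  have fu: "\<And>a b c. (a,b)\<in>M \<Longrightarrow> (a,c)\<in>M \<Longrightarrow> b = c"
   and lt: "\<And>a b. (a,b)\<in>M \<Longrightarrow> a < b"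
   and sub: "M \<subseteq> {1..n} \<times> {1..n}" using V unfolding VM_def by blast+
  have ltall: "\<forall>(a,b)\<in>M. a < b" using lt by blast
  have inX: "(a,b) \<in> RM n M" if "X \<in> P" "a \<in> X" "b \<in> X" for X a b
  proof -
    from that(1) obtain x where x: "x \<in> {1..n}" "X = RM n M `` {x}" unfolding P_def by (rule quotientE)
    have "(x,a) \<in> RM n M" "(x,b) \<in> RM n M" using that x by auto
    then show ?thesis using eq unfolding equiv_def sym_def trans_def by blast
  qed
  have fwd: "(a,b) \<in> M\<^sup>*" if "(a,b) \<in> RM n M" "a \<le> b" for a b
  proof -
    have "(a,b) \<in> (M \<union> M\<inverse>)\<^sup>*" using that unfolding RM_def by blast
    then have "(a,b) \<in> M\<^sup>* \<or> (b,a) \<in> M\<^sup>*" by (rule sym_path[OF V])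
    then show ?thesis
    proof
      assume "(b,a) \<in> M\<^sup>*"
      then have "b \<le> a" using path_le ltall by blast
      then have "a = b" using that by simp
      then show ?thesis by simp
    qed
  qed
  have "bump P a b \<longleftrightarrow> (a,b) \<in> M" for a b
  proof
    assume "bump P a b"
    then obtain X where X: "X \<in> P" "a \<in> X" "b \<in> X" "\<not>(\<exists>c\<in>X. a<c \<and> c<b)" "a < b"
      unfolding bump_def by blast
    have ab: "(a,b) \<in> M\<^sup>*" using fwd inX[OF X(1-3)] X(5) by simp
    have nab: "a \<noteq> b" using X(5) by simp
    obtain w where w: "(a,w) \<in> M" "(w,b) \<in> M\<^sup>*" using path_first[OF ab nab] by blast
    have "a < w" using lt w(1) by blast
    have "w \<le> b" using path_le[OF w(2) ltall] .
    have "(a,w) \<in> RM n M" using w(1) sub unfolding RM_def by blast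
    moreover obtain x where x: "x \<in> {1..n}" "X = RM n M `` {x}" using X(1) unfolding P_def by (rule quotientE)
    ultimately have "w \<in> X" using X(2) eq unfolding equiv_def trans_def by blast
    then have "\<not> w < b" using X(4) \<open>a < w\<close> by blast
    then have "w = b" using \<open>w \<le> b\<close> by simp
    then show "(a,b) \<in> M" using w(1) by simp
  next
    assume ab: "(a,b) \<in> M"
    have a: "a \<in> {1..n}" and b: "b \<in> {1..n}" using sub ab by blast+
    define X where "X = RM n M `` {a}"
    have XP: "X \<in> P" unfolding X_def P_def using a by (rule quotientI)
    have aX: "a \<in> X" unfolding X_def RM_def using a by blast
    have bX: "b \<in> X" unfolding X_def RM_def using a b ab by blast
    have nc: "\<not>(\<exists>c\<in>X. a<c \<and> c<b)"
    proof
      assume "\<exists>c\<in>X. a<c \<and> c<b"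
      then obtain c where c: "c \<in> X" "a < c" "c < b" by blast
      have ac: "(a,c) \<in> M\<^sup>*" using fwd[of a c] c unfolding X_def by simp
      have nac: "a \<noteq> c" using c(2) by simp
      obtain w where w: "(a,w) \<in> M" "(w,c) \<in> M\<^sup>*" using path_first[OF ac nac] by blast
      have "w = b" using fu w(1) ab by blast
      then have "b \<le> c" using path_le[OF w(2) ltall] by simp
      then show False using c by simp
    qed
    show "bump P a b" unfolding bump_def using XP aX bX nc lt[OF ab] by blast
  qed
  then have "bumps P = M" unfolding bumps_def by auto
  moreover have "P \<in> set_partitions n" using pp by (simp add: set_partitions_def)
  ultimately show ?thesis by blast
qed


definition cuts :: "nat \<Rightarrow> nat set \<Rightarrow> nat set" where
  "cuts n J = {1..<n} - J"

lemma sr_lt: "a < b \<Longrightarrow> same_region n J a b \<longleftrightarrow> (\<forall>k\<in>cuts n J. \<not>(a \<le> k \<and> k < b))"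
  unfolding same_region_def cuts_def by (simp add: min_def max_def)

lemma sr_sym: "same_region n J a b \<longleftrightarrow> same_region n J b a"
  unfolding same_region_def by (simp add: min.commute max.commute)

definition rho :: "nat \<Rightarrow> nat set \<Rightarrow> nat \<Rightarrow> int" where
  "rho n J x = int (2*n*card {k\<in>cuts n J. x \<le> k} + x)"

lemma fin_S: "finite {k\<in>cuts n J. x \<le> k}"
proof -
  have "{k\<in>cuts n J. x \<le> k} \<subseteq> {1..<n}" unfolding cuts_def by auto
  then show ?thesis by (rule finite_subset) simp
qed

lemma rho_diff:
  assumes "x < y" "y \<le> n" "\<not> same_region n J x y"
  shows "rho n J y < rho n J x"
proof -
  have "\<exists>k\<in>cuts n J. x \<le> k \<and> k < y" using assms(3) sr_lt[OF assms(1)] by simp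
  then obtain k where k: "k \<in> cuts n J" "x \<le> k" "k < y" by blast
  have sub: "{k\<in>cuts n J. y \<le> k} \<subset> {k\<in>cuts n J. x \<le> k}"
  proof (rule psubsetI)
    show "{k\<in>cuts n J. y \<le> k} \<subseteq> {k\<in>cuts n J. x \<le> k}"
    proof (rule subsetI)
      fix z assume "z \<in> {k\<in>cuts n J. y \<le> k}"
      then show "z \<in> {k\<in>cuts n J. x \<le> k}" using assms(1) by simp
    qed
    have kx: "k \<in> {k\<in>cuts n J. x \<le> k}" using k by simp
    have ky: "k \<notin> {k\<in>cuts n J. y \<le> k}" using k by simp
    show "{k\<in>cuts n J. y \<le> k} \<noteq> {k\<in>cuts n J. x \<le> k}" using kx ky by blast
  qed
  have c: "card {k\<in>cuts n J. y \<le> k} + 1 \<le> card {k\<in>cuts n J. x \<le> k}"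
    using psubset_card_mono[OF fin_S sub] by simp
  define cy where "cy = card {k\<in>cuts n J. y \<le> k}"
  define cx where "cx = card {k\<in>cuts n J. x \<le> k}"
  have c': "cy + 1 \<le> cx" using c unfolding cx_def cy_def .
  have "2*n*(cy+1) \<le> 2*n*cx" using c' by (rule mult_le_mono2)
  then have "2*n*cy + y < 2*n*cx + x" using assms(1,2) by (simp add: algebra_simps)
  then have "int (2*n*cy + y) < int (2*n*cx + x)" by (simp only: of_nat_less_iff)
  then show ?thesis unfolding rho_def cx_def cy_def by simp
qed

lemma rho_same:
  assumes "x < y" "same_region n J x y"
  shows "rho n J x < rho n J y"
proof -
  have "{k\<in>cuts n J. y \<le> k} = {k\<in>cuts n J. x \<le> k}"
    using assms sr_lt[OF assms(1)] by auto
  then show ?thesis unfolding rho_def using assms(1) by simp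
qed

lemma rho_inj: "inj_on (rho n J) {1..n}"
proof (rule inj_onI)
  fix x y assume h: "x \<in> {1..n}" "y \<in> {1..n}" "rho n J x = rho n J y"
  show "x = y"
  proof (rule ccontr)
    assume "x \<noteq> y"
    then have "x < y \<or> y < x" by auto
    then show False
    proof
      assume "x < y" then show False using h rho_diff[of x y n J] rho_same[of x y n J]
        by (cases "same_region n J x y") auto
    next
      assume "y < x" then show False using h rho_diff[of y x n J] rho_same[of y x n J]
        by (cases "same_region n J y x") auto
    qed
  qed
qed

definition regOK :: "nat \<Rightarrow> nat set \<Rightarrow> (nat \<times> nat) set \<Rightarrow> bool" where
  "regOK n J M \<longleftrightarrow> (\<forall>(a,b)\<in>M. \<not> same_region n J a b)"

definition pot :: "(nat \<Rightarrow> int) \<Rightarrow> (nat \<times> nat) set \<Rightarrow> int" where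
  "pot f M = (\<Sum>p\<in>M. int (snd p) * f (fst p))"

lemma VM_finite: "VM n M \<Longrightarrow> finite M"
  unfolding VM_def by (meson finite_SigmaI finite_atLeastAtMost finite_subset)

lemma swap:
  assumes V: "VM n M" and R: "regOK n J M" and ab: "(a,b) \<in> M" and ab': "(a',b') \<in> M"
    and ne: "a \<noteq> a'" and l1: "a < b'" and l2: "a' < b"
    and r1: "\<not> same_region n J a b'" and r2: "\<not> same_region n J a' b"
  defines "M' \<equiv> insert (a,b') (insert (a',b) (M - {(a,b),(a',b')}))"
  shows "VM n M' \<and> regOK n J M' \<and> Domain M' = Domain M \<and> Range M' = Range M \<and>
         pot f M' = pot f M + (int b' - int b) * (f a - f a')"
proof -
  have fu: "\<And>a b c. (a,b)\<in>M \<Longrightarrow> (a,c)\<in>M \<Longrightarrow> b = c"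
   and ij: "\<And>a b c. (a,c)\<in>M \<Longrightarrow> (b,c)\<in>M \<Longrightarrow> a = b"
   and lt: "\<And>a b. (a,b)\<in>M \<Longrightarrow> a < b"
   and sub: "M \<subseteq> {1..n} \<times> {1..n}" using V unfolding VM_def by blast+
  have nb: "b \<noteq> b'" using ij ab ab' ne by blast
  have M0a: "\<And>c. (a,c) \<in> M - {(a,b),(a',b')} \<Longrightarrow> False" using fu ab by blast
  have M0a': "\<And>c. (a',c) \<in> M - {(a,b),(a',b')} \<Longrightarrow> False" using fu ab' by blast
  have M0b: "\<And>c. (c,b) \<in> M - {(a,b),(a',b')} \<Longrightarrow> False" using ij ab by blast
  have M0b': "\<And>c. (c,b') \<in> M - {(a,b),(a',b')} \<Longrightarrow> False" using ij ab' by blast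
  have VM': "VM n M'"
    unfolding VM_def
  proof (intro conjI allI impI)
    show "M' \<subseteq> {1..n} \<times> {1..n}" unfolding M'_def using sub ab ab' by blast
    show "\<forall>(x,y)\<in>M'. x < y" unfolding M'_def using lt l1 l2 by blast
  next
    fix x y z assume "(x,y) \<in> M'" "(x,z) \<in> M'"
    then show "y = z" unfolding M'_def using fu ne M0a M0a' by blast
  next
    fix x y z assume "(x,z) \<in> M'" "(y,z) \<in> M'"
    then show "x = y" unfolding M'_def using ij nb M0b M0b' by blast
  qed
  have R': "regOK n J M'" using R r1 r2 sr_sym unfolding regOK_def M'_def by blast
  have D: "Domain M' = Domain M" unfolding M'_def using ab ab' by blast
  have Rg: "Range M' = Range M" unfolding M'_def using ab ab' by blast
  have fin: "finite M" using VM_finite[OF V] .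
  define M0 where "M0 = M - {(a,b),(a',b')}"
  have finM0: "finite M0" unfolding M0_def using fin by simp
  define g where "g = (\<lambda>p::nat\<times>nat. int (snd p) * f (fst p))"
  have pg: "\<And>M. pot f M = sum g M" unfolding pot_def g_def by simp
  have "pot f M = g (a,b) + sum g (M - {(a,b)})" unfolding pg by (rule sum.remove[OF fin ab])
  also have "sum g (M - {(a,b)}) = g (a',b') + sum g (M - {(a,b)} - {(a',b')})"
    using sum.remove[of "M - {(a,b)}" "(a',b')" g] fin ab' ne by simp
  also have "M - {(a,b)} - {(a',b')} = M0" unfolding M0_def by blast
  finally have p1: "pot f M = g (a,b) + g (a',b') + sum g M0" by simp
  have n1: "(a',b) \<notin> M0" unfolding M0_def using M0a' by blast
  have n2: "(a,b') \<notin> insert (a',b) M0" unfolding M0_def using M0a ne by blast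
  have "pot f M' = g (a,b') + (g (a',b) + sum g M0)" unfolding pg M'_def
    using n1 n2 finM0 unfolding M0_def by simp
  then have "pot f M' = pot f M + (int b' - int b) * (f a - f a')"
    using p1 unfolding g_def by (simp add: algebra_simps)
  then show ?thesis using VM' R' D Rg by blast
qed


lemma exist_opt:
  assumes V: "VM n M" and R: "regOK n J M"
  and imp: "\<And>M. VM n M \<Longrightarrow> regOK n J M \<Longrightarrow> \<not> Q M \<Longrightarrow> \<exists>M'. VM n M' \<and> regOK n J M' \<and>
              Domain M' = Domain M \<and> Range M' = Range M \<and> pot f M < pot f M'"
  shows "\<exists>M'. VM n M' \<and> regOK n J M' \<and> Domain M' = Domain M \<and> Range M' = Range M \<and> Q M'"
proof -
  define F where "F = {M'. VM n M' \<and> regOK n J M' \<and> Domain M' = Domain M \<and> Range M' = Range M}"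
  have "F \<subseteq> Pow ({1..n}\<times>{1..n})" unfolding F_def VM_def by blast
  then have finF: "finite F" by (rule finite_subset) simp
  have MF: "M \<in> F" using V R unfolding F_def by simp
  define m where "m = Max (pot f ` F)"
  have "m \<in> pot f ` F" unfolding m_def using finF MF by (intro Max_in) auto
  then obtain Mx where Mx: "Mx \<in> F" "pot f Mx = m" by blast
  have mx: "\<And>M'. M' \<in> F \<Longrightarrow> pot f M' \<le> m" unfolding m_def using finF by (intro Max_ge) auto
  have Mx': "VM n Mx" "regOK n J Mx" "Domain Mx = Domain M" "Range Mx = Range M"
    using Mx(1) unfolding F_def by simp_all
  show ?thesis
  proof (cases "Q Mx")
    case True then show ?thesis using Mx' by blast
  next
    case False
    from imp[OF Mx'(1,2) False] obtain M' where M': "VM n M'" "regOK n J M'"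
      "Domain M' = Domain Mx" "Range M' = Range Mx" "pot f Mx < pot f M'" by blast
    then have "M' \<in> F" using Mx' unfolding F_def by simp
    then have "pot f M' \<le> m" by (rule mx)
    then show ?thesis using M'(5) Mx(2) by simp
  qed
qed

lemma swap_nest:
  assumes V: "VM n M" and R: "regOK n J M" and h: "(i1,i2) \<in> M" "(j1,j2) \<in> M"
    and o: "i1 < j1" "j1 < j2" "j2 < i2"
  shows "\<exists>M'. VM n M' \<and> regOK n J M' \<and> Domain M' = Domain M \<and> Range M' = Range M \<and>
         pot f M' = pot f M + (int j2 - int i2) * (f i1 - f j1)"
proof -
  have "\<not> same_region n J j1 j2" using R h(2) unfolding regOK_def by blast
  then have "\<exists>k\<in>cuts n J. j1 \<le> k \<and> k < j2" using sr_lt[OF o(2)] by simp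
  then obtain k where k: "k \<in> cuts n J" "j1 \<le> k" "k < j2" by blast
  have r1: "\<not> same_region n J i1 j2" using sr_lt[of i1 j2 n J] k o by auto
  have r2: "\<not> same_region n J j1 i2" using sr_lt[of j1 i2 n J] k o by auto
  show ?thesis using swap[OF V R h(1) h(2) _ _ _ r1 r2, of f] o by auto
qed

lemma swap_cross:
  assumes V: "VM n M" and R: "regOK n J M" and h: "(i1,i2) \<in> M" "(j1,j2) \<in> M"
    and o: "i1 < j1" "j1 < i2" "i2 < j2" and s1: "\<not> same_region n J i1 j1" and s2: "\<not> same_region n J i2 j1"
  shows "\<exists>M'. VM n M' \<and> regOK n J M' \<and> Domain M' = Domain M \<and> Range M' = Range M \<and>
         pot f M' = pot f M + (int j2 - int i2) * (f i1 - f j1)"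
proof -
  have "\<exists>k\<in>cuts n J. i1 \<le> k \<and> k < j1" using s1 sr_lt[OF o(1)] by simp
  then obtain k where k: "k \<in> cuts n J" "i1 \<le> k" "k < j1" by blast
  have r1: "\<not> same_region n J i1 j2" using sr_lt[of i1 j2 n J] k o by auto
  have r2: "\<not> same_region n J j1 i2" using s2 sr_sym by blast
  show ?thesis using swap[OF V R h(1) h(2) _ _ _ r1 r2, of f] o by auto
qed

definition NNm :: "nat \<Rightarrow> nat set \<Rightarrow> (nat \<times> nat) set \<Rightarrow> bool" where
  "NNm n J M \<longleftrightarrow> regOK n J M \<and>
     \<not> (\<exists>i1 i2 j1 j2. (i1,i2) \<in> M \<and> (j1,j2) \<in> M \<and> (i1, i2) \<noteq> (j1, j2) \<and>
        i1 < j1 \<and> j1 < j2 \<and> j2 < i2)"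

definition NCm :: "nat \<Rightarrow> nat set \<Rightarrow> (nat \<times> nat) set \<Rightarrow> bool" where
  "NCm n J M \<longleftrightarrow> regOK n J M \<and>
     (\<forall>i1 i2 j1 j2. (i1,i2) \<in> M \<and> (j1,j2) \<in> M \<and> (i1, i2) \<noteq> (j1, j2) \<and>
        i1 < j1 \<and> j1 < i2 \<and> i2 < j2 \<longrightarrow>
        same_region n J i1 j1 \<or> same_region n J i2 j1) \<and>
     (\<forall>i1 i2 j1 j2. (i1,i2) \<in> M \<and> (j1,j2) \<in> M \<and> (i1, i2) \<noteq> (j1, j2) \<and>
        i1 < j1 \<and> j1 < j2 \<and> j2 < i2 \<longrightarrow>
        \<not> same_region n J i1 j1)"

lemma NN_exists:
  assumes "VM n M" "regOK n J M"
  shows "\<exists>M'. VM n M' \<and> regOK n J M' \<and> Domain M' = Domain M \<and> Range M' = Range M \<and> NNm n J M'"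
proof (rule exist_opt[OF assms, where f = int])
  fix M assume V: "VM n M" and R: "regOK n J M" and N: "\<not> NNm n J M"
  then obtain i1 i2 j1 j2 where h: "(i1,i2) \<in> M" "(j1,j2) \<in> M" "i1 < j1" "j1 < j2" "j2 < i2"
    unfolding NNm_def by blast
  obtain M' where M': "VM n M'" "regOK n J M'" "Domain M' = Domain M" "Range M' = Range M"
    "pot int M' = pot int M + (int j2 - int i2) * (int i1 - int j1)"
    using swap_nest[OF V R h, of int] by blast
  have "(int j2 - int i2) * (int i1 - int j1) > 0" using h(3-5) by (intro mult_neg_neg) auto
  then show "\<exists>M'. VM n M' \<and> regOK n J M' \<and> Domain M' = Domain M \<and> Range M' = Range M \<and> pot int M < pot int M'"
    using M' by auto
qed

lemma NC_exists:
  assumes "VM n M" "regOK n J M"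
  shows "\<exists>M'. VM n M' \<and> regOK n J M' \<and> Domain M' = Domain M \<and> Range M' = Range M \<and> NCm n J M'"
proof (rule exist_opt[OF assms, where f = "rho n J"])
  fix M assume V: "VM n M" and R: "regOK n J M" and N: "\<not> NCm n J M"
  have sub: "M \<subseteq> {1..n} \<times> {1..n}" using V unfolding VM_def by blast
  from N R have "(\<exists>i1 i2 j1 j2. (i1,i2) \<in> M \<and> (j1,j2) \<in> M \<and>
        i1 < j1 \<and> j1 < i2 \<and> i2 < j2 \<and> \<not> same_region n J i1 j1 \<and> \<not> same_region n J i2 j1) \<or>
      (\<exists>i1 i2 j1 j2. (i1,i2) \<in> M \<and> (j1,j2) \<in> M \<and>
        i1 < j1 \<and> j1 < j2 \<and> j2 < i2 \<and> same_region n J i1 j1)"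
    unfolding NCm_def by blast
  then show "\<exists>M'. VM n M' \<and> regOK n J M' \<and> Domain M' = Domain M \<and> Range M' = Range M \<and> pot (rho n J) M < pot (rho n J) M'"
  proof
    assume "\<exists>i1 i2 j1 j2. (i1,i2) \<in> M \<and> (j1,j2) \<in> M \<and>
        i1 < j1 \<and> j1 < i2 \<and> i2 < j2 \<and> \<not> same_region n J i1 j1 \<and> \<not> same_region n J i2 j1"
    then obtain i1 i2 j1 j2 where h: "(i1,i2) \<in> M" "(j1,j2) \<in> M" "i1 < j1" "j1 < i2" "i2 < j2"
      "\<not> same_region n J i1 j1" "\<not> same_region n J i2 j1" by blast
    obtain M' where M': "VM n M'" "regOK n J M'" "Domain M' = Domain M" "Range M' = Range M"
      "pot (rho n J) M' = pot (rho n J) M + (int j2 - int i2) * (rho n J i1 - rho n J j1)"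
      using swap_cross[OF V R h(1,2) h(3-7), of "rho n J"] by blast
    have "j1 \<le> n" using sub h(2) by auto
    then have "rho n J j1 < rho n J i1" using rho_diff h(3,6) by blast
    then have "(int j2 - int i2) * (rho n J i1 - rho n J j1) > 0" using h(5) by (intro mult_pos_pos) auto
    then show ?thesis using M' by auto
  next
    assume "\<exists>i1 i2 j1 j2. (i1,i2) \<in> M \<and> (j1,j2) \<in> M \<and>
        i1 < j1 \<and> j1 < j2 \<and> j2 < i2 \<and> same_region n J i1 j1"
    then obtain i1 i2 j1 j2 where h: "(i1,i2) \<in> M" "(j1,j2) \<in> M" "i1 < j1" "j1 < j2" "j2 < i2"
      "same_region n J i1 j1" by blast
    obtain M' where M': "VM n M'" "regOK n J M'" "Domain M' = Domain M" "Range M' = Range M"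
      "pot (rho n J) M' = pot (rho n J) M + (int j2 - int i2) * (rho n J i1 - rho n J j1)"
      using swap_nest[OF V R h(1,2) h(3-5), of "rho n J"] by blast
    have "rho n J i1 < rho n J j1" using rho_same h(3,6) by blast
    then have "(int j2 - int i2) * (rho n J i1 - rho n J j1) > 0" using h(5) by (intro mult_neg_neg) auto
    then show ?thesis using M' by auto
  qed
qed


lemma uniq:
  assumes V1: "VM n M1" and V2: "VM n M2" and D: "Domain M1 = Domain M2" and Rg: "Range M1 = Range M2"
  and inj: "inj_on (f :: nat \<Rightarrow> int) {1..n}"
  and H: "\<And>M N a a' b1 b2. (M = M1 \<and> N = M2) \<or> (M = M2 \<and> N = M1) \<Longrightarrow> (a,b1) \<in> N \<Longrightarrow>
            (a,b2) \<in> M \<Longrightarrow> (a',b1) \<in> M \<Longrightarrow> b1 < b2 \<Longrightarrow> f a < f a' \<Longrightarrow> False"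
  shows "M1 = M2"
proof (rule ccontr)
  assume neq: "M1 \<noteq> M2"
  define Dset where "Dset = {x. \<exists>y. ((x,y) \<in> M1 \<and> (x,y) \<notin> M2) \<or> ((x,y) \<in> M2 \<and> (x,y) \<notin> M1)}"
  have s1: "M1 \<subseteq> {1..n} \<times> {1..n}" using V1 unfolding VM_def by blast
  have s2: "M2 \<subseteq> {1..n} \<times> {1..n}" using V2 unfolding VM_def by blast
  have Dsub: "Dset \<subseteq> {1..n}" unfolding Dset_def using s1 s2 by blast
  have finD: "finite Dset" using Dsub by (rule finite_subset) simp
  have neD: "Dset \<noteq> {}" using neq unfolding Dset_def by auto
  define m where "m = Min (f ` Dset)"
  have "m \<in> f ` Dset" unfolding m_def using finD neD by (intro Min_in) auto
  then obtain a where a: "a \<in> Dset" "f a = m" by blast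
  have amin: "\<And>x. x \<in> Dset \<Longrightarrow> f a \<le> f x" unfolding a(2) m_def using finD by (intro Min_le) auto
  have aDom: "a \<in> Domain M1"
  proof -
    from a(1) obtain y where "((a,y) \<in> M1 \<and> (a,y) \<notin> M2) \<or> ((a,y) \<in> M2 \<and> (a,y) \<notin> M1)"
      unfolding Dset_def by blast
    then show ?thesis using D by blast
  qed
  then obtain b1 where b1: "(a,b1) \<in> M1" by blast
  from aDom D obtain b2 where b2: "(a,b2) \<in> M2" by blast
  have fu1: "\<And>a b c. (a,b)\<in>M1 \<Longrightarrow> (a,c)\<in>M1 \<Longrightarrow> b = c"
   and ij1: "\<And>a b c. (a,c)\<in>M1 \<Longrightarrow> (b,c)\<in>M1 \<Longrightarrow> a = b" using V1 unfolding VM_def by blast+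
  have fu2: "\<And>a b c. (a,b)\<in>M2 \<Longrightarrow> (a,c)\<in>M2 \<Longrightarrow> b = c"
   and ij2: "\<And>a b c. (a,c)\<in>M2 \<Longrightarrow> (b,c)\<in>M2 \<Longrightarrow> a = b" using V2 unfolding VM_def by blast+
  have "b1 \<noteq> b2"
  proof
    assume e: "b1 = b2"
    from a(1) obtain y where "((a,y) \<in> M1 \<and> (a,y) \<notin> M2) \<or> ((a,y) \<in> M2 \<and> (a,y) \<notin> M1)"
      unfolding Dset_def by blast
    then show False
    proof
      assume "(a,y) \<in> M1 \<and> (a,y) \<notin> M2"
      then have "y = b1" using fu1 b1 by blast
      then show False using b2 e \<open>(a,y) \<in> M1 \<and> (a,y) \<notin> M2\<close> by simp
    next
      assume "(a,y) \<in> M2 \<and> (a,y) \<notin> M1"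
      then have "y = b2" using fu2 b2 by blast
      then show False using b1 e \<open>(a,y) \<in> M2 \<and> (a,y) \<notin> M1\<close> by simp
    qed
  qed
  have key: False if MN: "(M = M1 \<and> N = M2) \<or> (M = M2 \<and> N = M1)"
    and c1: "(a,c1) \<in> N" and c2: "(a,c2) \<in> M" and lt: "c1 < c2" for M N c1 c2
  proof -
    have VM: "VM n M" and VN: "VM n N" using MN V1 V2 by blast+
    have RMN: "Range M = Range N" using MN Rg by auto
    have fuM: "\<And>a b c. (a,b)\<in>M \<Longrightarrow> (a,c)\<in>M \<Longrightarrow> b = c" using VM unfolding VM_def by blast
    have ijN: "\<And>a b c. (a,c)\<in>N \<Longrightarrow> (b,c)\<in>N \<Longrightarrow> a = b" using VN unfolding VM_def by blast
    have subM: "M \<subseteq> {1..n} \<times> {1..n}" using VM unfolding VM_def by blast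
    have "c1 \<in> Range M" using c1 RMN by blast
    then obtain a' where a': "(a',c1) \<in> M" by blast
    have nN: "(a',c1) \<notin> N"
    proof
      assume "(a',c1) \<in> N"
      then have "a' = a" using ijN c1 by blast
      then have "c1 = c2" using fuM a' c2 by blast
      then show False using lt by simp
    qed
    have a'D: "a' \<in> Dset" using MN a' nN unfolding Dset_def by blast
    have ne: "a' \<noteq> a" using fuM a' c2 lt by fastforce
    have "a \<in> {1..n}" "a' \<in> {1..n}" using subM a' c2 by blast+
    then have "f a \<noteq> f a'" using inj ne unfolding inj_on_def by blast
    moreover have "f a \<le> f a'" using amin a'D by blast
    ultimately have "f a < f a'" by simp
    then show False using H[OF MN c1 c2 a' lt] by blast
  qed
  show False
  proof (cases "b1 < b2")
    case True then show False using key[of M2 M1 b1 b2] b1 b2 by blast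
  next
    case False then have "b2 < b1" using \<open>b1 \<noteq> b2\<close> by simp
    then show False using key[of M1 M2 b2 b1] b1 b2 by blast
  qed
qed

lemma uniq_NN:
  assumes "VM n M1" "VM n M2" "Domain M1 = Domain M2" "Range M1 = Range M2" "NNm n J M1" "NNm n J M2"
  shows "M1 = M2"
proof (rule uniq[OF assms(1-4), of int])
  show "inj_on int {1..n}" by (simp add: inj_on_def)
next
  fix M N a a' b1 b2
  assume MN: "(M = M1 \<and> N = M2) \<or> (M = M2 \<and> N = M1)" and h: "(a,b1) \<in> N" "(a,b2) \<in> M" "(a',b1) \<in> M"
    "b1 < b2" "int a < int a'"
  have NN: "NNm n J M" and VM: "VM n M" using MN assms by blast+
  have "a' < b1" using VM h(3) unfolding VM_def by blast
  moreover have "(a,b2) \<noteq> (a',b1)" using h(4) by simp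
  ultimately show False using NN h unfolding NNm_def by force
qed

lemma uniq_NC:
  assumes "VM n M1" "VM n M2" "Domain M1 = Domain M2" "Range M1 = Range M2" "NCm n J M1" "NCm n J M2"
  shows "M1 = M2"
proof (rule uniq[OF assms(1-4), of "rho n J"])
  show "inj_on (rho n J) {1..n}" by (rule rho_inj)
next
  fix M N a a' b1 b2
  assume MN: "(M = M1 \<and> N = M2) \<or> (M = M2 \<and> N = M1)" and h: "(a,b1) \<in> N" "(a,b2) \<in> M" "(a',b1) \<in> M"
    "b1 < b2" "rho n J a < rho n J a'"
  have NC: "NCm n J M" and VM: "VM n M" and NCN: "NCm n J N" and VN: "VM n N" using MN assms by blast+
  have "a' < b1" using VM h(3) unfolding VM_def by blast
  have "a < b1" using VN h(1) unfolding VM_def by blast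
  have nsr: "\<not> same_region n J a b1" using NCN h(1) unfolding NCm_def regOK_def by blast
  have a'n: "a' \<le> n" using VM h(3) unfolding VM_def by auto
  have "a \<noteq> a'" using h(5) by auto
  then have "a < a' \<or> a' < a" by auto
  then show False
  proof
    assume aa: "a < a'"
    have "same_region n J a a'"
    proof (rule ccontr)
      assume "\<not> same_region n J a a'"
      then have "rho n J a' < rho n J a" using rho_diff aa a'n by blast
      then show False using h(5) by simp
    qed
    moreover have "(a,b2) \<noteq> (a',b1)" using h(4) by simp
    ultimately show False using NC h(2,3) aa \<open>a' < b1\<close> h(4) unfolding NCm_def by blast
  next
    assume aa: "a' < a"
    have "\<not> same_region n J a' a"
    proof
      assume "same_region n J a' a"
      then have "rho n J a' < rho n J a" using rho_same aa by blast
      then show False using h(5) by simp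
    qed
    moreover have "\<not> same_region n J b1 a" using nsr sr_sym by blast
    moreover have "(a',b1) \<noteq> (a,b2)" using h(4) by simp
    ultimately show False using NC h(2,3) aa \<open>a < b1\<close> h(4) unfolding NCm_def by blast
  qed
qed


lemma region_iff:
  assumes P: "P \<in> set_partitions n"
  shows "region_injective n J P \<longleftrightarrow> regOK n J (bumps P)"
proof
  assume RI: "region_injective n J P"
  have "\<not> same_region n J a b" if "bump P a b" for a b
  proof -
    from that have ab: "a < b" and "\<exists>B\<in>P. a \<in> B \<and> b \<in> B \<and> \<not> (\<exists>c\<in>B. a < c \<and> c < b)"
      unfolding bump_def by simp_all
    then obtain B where B: "B \<in> P" "a \<in> B" "b \<in> B" by blast
    have ne: "a \<noteq> b" using ab by simp
    show ?thesis using RI[unfolded region_injective_def, rule_format, OF B ne] .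
  qed
  then show "regOK n J (bumps P)" unfolding regOK_def bumps_def by auto
next
  assume R: "regOK n J (bumps P)"
  have p: "partition_on {1..n} P" using P by (simp add: set_partitions_def)
  have lt: "\<not> same_region n J a b" if hB: "B \<in> P" "a \<in> B" "b \<in> B" "a < b" for B a b
  proof -
    obtain c where c: "bump P a c" "c \<le> b" "c \<in> B" using next_bump[OF p hB] by blast
    have "a < c" using c(1) unfolding bump_def by blast
    have "(a,c) \<in> bumps P" using c(1) unfolding bumps_def by simp
    then have "\<not> same_region n J a c" using R unfolding regOK_def by blast
    then have "\<exists>k\<in>cuts n J. a \<le> k \<and> k < c" using sr_lt[OF \<open>a < c\<close>] by simp
    then obtain k where k: "k \<in> cuts n J" "a \<le> k" "k < c" by blast
    show ?thesis using sr_lt[OF hB(4)] k c(2) by auto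
  qed
  show "region_injective n J P" unfolding region_injective_def
  proof (intro ballI impI)
    fix B a b assume h: "B \<in> P" "a \<in> B" "b \<in> B" "a \<noteq> b"
    show "\<not> same_region n J a b"
    proof (cases "a < b")
      case True then show ?thesis using lt h by blast
    next
      case False then have "b < a" using h(4) by simp
      then show ?thesis using lt[OF h(1) h(3) h(2)] sr_sym by blast
    qed
  qed
qed

lemma NN_iff: "P \<in> set_partitions n \<Longrightarrow> J_nonnesting n J P \<longleftrightarrow> NNm n J (bumps P)"
  unfolding J_nonnesting_def NNm_def using region_iff[of P n J] by (simp add: bumps_def)

lemma NC_iff: "P \<in> set_partitions n \<Longrightarrow> J_noncrossing n J P \<longleftrightarrow> NCm n J (bumps P)"
  unfolding J_noncrossing_def NCm_def using region_iff[of P n J] by (simp add: bumps_def)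

lemma bij_rel:
  assumes e1: "\<And>x. x \<in> A \<Longrightarrow> \<exists>y\<in>B. R x y"
    and u1: "\<And>x y1 y2. x \<in> A \<Longrightarrow> y1 \<in> B \<Longrightarrow> y2 \<in> B \<Longrightarrow> R x y1 \<Longrightarrow> R x y2 \<Longrightarrow> y1 = y2"
    and e2: "\<And>y. y \<in> B \<Longrightarrow> \<exists>x\<in>A. R x y"
    and u2: "\<And>y x1 x2. y \<in> B \<Longrightarrow> x1 \<in> A \<Longrightarrow> x2 \<in> A \<Longrightarrow> R x1 y \<Longrightarrow> R x2 y \<Longrightarrow> x1 = x2"
  shows "\<exists>f. bij_betw f A B"
proof -
  define f where "f = (\<lambda>x. SOME y. y \<in> B \<and> R x y)"
  have f: "f x \<in> B \<and> R x (f x)" if "x \<in> A" for x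
    unfolding f_def using e1[OF that] by (metis (mono_tags, lifting) someI_ex)
  have "bij_betw f A B"
    unfolding bij_betw_def
  proof
    show "inj_on f A"
    proof (rule inj_onI)
      fix x1 x2 assume h: "x1 \<in> A" "x2 \<in> A" "f x1 = f x2"
      show "x1 = x2" using u2[of "f x1" x1 x2] f[OF h(1)] f[OF h(2)] h by simp
    qed
    show "f ` A = B"
    proof
      show "f ` A \<subseteq> B" using f by blast
      show "B \<subseteq> f ` A"
      proof
        fix y assume y: "y \<in> B"
        then obtain x where x: "x \<in> A" "R x y" using e2 by blast
        then have "f x = y" using u1[of x "f x" y] f[OF x(1)] y by simp
        then show "y \<in> f ` A" using x(1) by blast
      qed
    qed
  qed
  then show ?thesis by blast
qed

theorem theorem5p3:
  fixes n :: nat and J :: "nat set"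
  assumes "n > 0" and "J \<subseteq> {1..<n}"
  shows "\<exists>f. bij_betw f (NN n J) (NC n J)"
proof (rule bij_rel[where R = "\<lambda>P Q. Domain (bumps P) = Domain (bumps Q) \<and> Range (bumps P) = Range (bumps Q)"])
  fix P assume "P \<in> NN n J"
  then have P: "P \<in> set_partitions n" "NNm n J (bumps P)" unfolding NN_def using NN_iff by auto
  have V: "VM n (bumps P)" using bumps_VM[OF P(1)] .
  have R: "regOK n J (bumps P)" using P(2) unfolding NNm_def by simp
  obtain M' where M': "VM n M'" "regOK n J M'" "Domain M' = Domain (bumps P)" "Range M' = Range (bumps P)"
    "NCm n J M'" using NC_exists[OF V R] by blast
  obtain Q where Q: "Q \<in> set_partitions n" "bumps Q = M'" using bumps_surj[OF M'(1)] by blast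
  have QN: "Q \<in> NC n J" unfolding NC_def using Q M'(5) NC_iff by auto
  have "Domain (bumps P) = Domain (bumps Q) \<and> Range (bumps P) = Range (bumps Q)"
    using Q(2) M'(3,4) by simp
  then show "\<exists>Q\<in>NC n J. Domain (bumps P) = Domain (bumps Q) \<and> Range (bumps P) = Range (bumps Q)"
    using QN by blast
next
  fix Q assume "Q \<in> NC n J"
  then have Q: "Q \<in> set_partitions n" "NCm n J (bumps Q)" unfolding NC_def using NC_iff by auto
  have V: "VM n (bumps Q)" using bumps_VM[OF Q(1)] .
  have R: "regOK n J (bumps Q)" using Q(2) unfolding NCm_def by simp
  obtain M' where M': "VM n M'" "regOK n J M'" "Domain M' = Domain (bumps Q)" "Range M' = Range (bumps Q)"
    "NNm n J M'" using NN_exists[OF V R] by blast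
  obtain P where P: "P \<in> set_partitions n" "bumps P = M'" using bumps_surj[OF M'(1)] by blast
  have PN: "P \<in> NN n J" unfolding NN_def using P M'(5) NN_iff by auto
  have "Domain (bumps P) = Domain (bumps Q) \<and> Range (bumps P) = Range (bumps Q)"
    using P(2) M'(3,4) by simp
  then show "\<exists>P\<in>NN n J. Domain (bumps P) = Domain (bumps Q) \<and> Range (bumps P) = Range (bumps Q)"
    using PN by blast
next
  fix P Q1 Q2 assume h: "P \<in> NN n J" "Q1 \<in> NC n J" "Q2 \<in> NC n J"
    "Domain (bumps P) = Domain (bumps Q1) \<and> Range (bumps P) = Range (bumps Q1)"
    "Domain (bumps P) = Domain (bumps Q2) \<and> Range (bumps P) = Range (bumps Q2)"
  have Q1: "Q1 \<in> set_partitions n" "NCm n J (bumps Q1)" using h(2) unfolding NC_def using NC_iff by auto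
  have Q2: "Q2 \<in> set_partitions n" "NCm n J (bumps Q2)" using h(3) unfolding NC_def using NC_iff by auto
  have "bumps Q1 = bumps Q2"
    by (rule uniq_NC[OF bumps_VM[OF Q1(1)] bumps_VM[OF Q2(1)] _ _ Q1(2) Q2(2)]) (use h(4,5) in auto)
  then show "Q1 = Q2" using bumps_inj Q1(1) Q2(1) by blast
next
  fix Q P1 P2 assume h: "Q \<in> NC n J" "P1 \<in> NN n J" "P2 \<in> NN n J"
    "Domain (bumps P1) = Domain (bumps Q) \<and> Range (bumps P1) = Range (bumps Q)"
    "Domain (bumps P2) = Domain (bumps Q) \<and> Range (bumps P2) = Range (bumps Q)"
  have P1: "P1 \<in> set_partitions n" "NNm n J (bumps P1)" using h(2) unfolding NN_def using NN_iff by auto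
  have P2: "P2 \<in> set_partitions n" "NNm n J (bumps P2)" using h(3) unfolding NN_def using NN_iff by auto
  have "bumps P1 = bumps P2"
    by (rule uniq_NN[OF bumps_VM[OF P1(1)] bumps_VM[OF P2(1)] _ _ P1(2) P2(2)]) (use h(4,5) in auto)
  then show "P1 = P2" using bumps_inj P1(1) P2(1) by blast
qed

end
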